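(* Let $\textup{Sav}_{312}(z)=\sum_{n\ge0}\textup{Sav}_n(312)z^n$ (with $\textup{Sav}_0(312)=1$). Then \[\textup{Sav}_{312}(z)=\frac{-z^3+z^2+z-1}{z^4-2z^3+z^2+2z-1}.\] In particular, $\textup{Sav}_{312}(z)=1/(1-B(z))$ where $B(z)=z+\sum_{n\ge2}\lfloor n/2\rfloor z^n=\frac{z^4-z^3+z}{(z-1)^2(z+1)}$ is the generating function of strongly 312-avoiding permutations ending in the entry $1$.
   Context: Permutations are written in one-line notation $p=p_1\cdots p_n$ with $p_i=p(i)$. $p$ contains a pattern $q=q_1\cdots q_m$ if there are indices $i_1<\cdots<i_m$ with $p_{i_r}<p_{i_s}$ iff $q_r<q_s$; otherwise $p$ avoids $q$. $p^2(i)=p(p(i))$. A permutation $p$ is strongly $q$-avoiding if both $p$ and $p^2$ avoid $q$, and $\textup{Sav}_n(q)$ is the number of strongly $q$-avoiding permutations of length $n$. *)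

theory Defs
  imports "HOL-Combinatorics.Permutations" "HOL-Computational_Algebra.Formal_Power_Series"
begin

text \<open>Permutations of length n are bijections p of {1..n} (p permutes {1..n}), with
  one-line notation p(1) ... p(n). A pattern q of length m is given likewise on {1..m}.\<close>

definition contains :: "(nat \<Rightarrow> nat) \<Rightarrow> nat \<Rightarrow> (nat \<Rightarrow> nat) \<Rightarrow> nat \<Rightarrow> bool" where
  "contains p n q m \<longleftrightarrow>
     (\<exists>ix :: nat \<Rightarrow> nat.
        (\<forall>r\<in>{1..m}. ix r \<in> {1..n}) \<and>
        (\<forall>r\<in>{1..m}. \<forall>s\<in>{1..m}. r < s \<longrightarrow> ix r < ix s) \<and>
        (\<forall>r\<in>{1..m}. \<forall>s\<in>{1..m}. p (ix r) < p (ix s) \<longleftrightarrow> q r < q s))"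

definition avoids :: "(nat \<Rightarrow> nat) \<Rightarrow> nat \<Rightarrow> (nat \<Rightarrow> nat) \<Rightarrow> nat \<Rightarrow> bool" where
  "avoids p n q m \<longleftrightarrow> \<not> contains p n q m"

definition strongly_avoids :: "(nat \<Rightarrow> nat) \<Rightarrow> nat \<Rightarrow> (nat \<Rightarrow> nat) \<Rightarrow> nat \<Rightarrow> bool" where
  "strongly_avoids p n q m \<longleftrightarrow> avoids p n q m \<and> avoids (p \<circ> p) n q m"

definition pat312 :: "nat \<Rightarrow> nat" where
  "pat312 i = (if i = 1 then 3 else if i = 2 then 1 else if i = 3 then 2 else i)"

definition Sav :: "nat \<Rightarrow> (nat \<Rightarrow> nat) \<Rightarrow> nat \<Rightarrow> nat" where
  "Sav n q m = card {p. p permutes {1..n} \<and> strongly_avoids p n q m}"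

definition Sav_end1 :: "nat \<Rightarrow> (nat \<Rightarrow> nat) \<Rightarrow> nat \<Rightarrow> nat" where
  "Sav_end1 n q m = card {p. p permutes {1..n} \<and> strongly_avoids p n q m \<and> p n = 1}"

end

theory Submission
  imports Defs
begin

unbundle fps_syntax

definition av312 :: "(nat \<Rightarrow> nat) \<Rightarrow> nat \<Rightarrow> bool" where
  "av312 p n \<longleftrightarrow> (\<forall>a b c. 1 \<le> a \<longrightarrow> a < b \<longrightarrow> b < c \<longrightarrow> c \<le> n \<longrightarrow> \<not> (p b < p c \<and> p c < p a))"

lemma three_set: "{1..3::nat} = {1,2,3}" by auto

lemma contains312: "contains p n pat312 3 \<longleftrightarrow> \<not> av312 p n"
proof
  assume "contains p n pat312 3"
  then obtain ix where h1: "\<forall>r\<in>{1..3}. ix r \<in> {1..n}"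
    and h2: "\<forall>r\<in>{1..3}. \<forall>s\<in>{1..3}. r < s \<longrightarrow> ix r < ix s"
    and h3: "\<forall>r\<in>{1..3}. \<forall>s\<in>{1..3}. p (ix r) < p (ix s) \<longleftrightarrow> pat312 r < pat312 s"
    unfolding contains_def by blast
  have "ix 1 \<ge> 1" "ix 3 \<le> n" "ix 1 < ix 2" "ix 2 < ix 3" using h1 h2 by (auto simp: three_set)
  moreover have "p (ix 2) < p (ix 3)" "p (ix 3) < p (ix 1)" using h3 by (auto simp: three_set pat312_def)
  ultimately show "\<not> av312 p n" unfolding av312_def by blast
next
  assume "\<not> av312 p n"
  then obtain a b c where h: "1 \<le> a" "a < b" "b < c" "c \<le> n" "p b < p c" "p c < p a"
    unfolding av312_def by blast
  define ix where "ix r = (if r = 1 then a else if r = 2 then b else c)" for r :: nat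
  have "(\<forall>r\<in>{1..3}. ix r \<in> {1..n}) \<and>
        (\<forall>r\<in>{1..3}. \<forall>s\<in>{1..3}. r < s \<longrightarrow> ix r < ix s) \<and>
        (\<forall>r\<in>{1..3}. \<forall>s\<in>{1..3}. p (ix r) < p (ix s) \<longleftrightarrow> pat312 r < pat312 s)"
    using h by (auto simp: three_set pat312_def ix_def)
  then show "contains p n pat312 3" unfolding contains_def by blast
qed

lemma sa_iff: "strongly_avoids p n pat312 3 \<longleftrightarrow> av312 p n \<and> av312 (p \<circ> p) n"
  unfolding strongly_avoids_def avoids_def contains312 by simp

lemma permI:
  assumes "inj_on g {1..n::nat}" "g ` {1..n} \<subseteq> {1..n}" "\<And>x. x \<notin> {1..n} \<Longrightarrow> g x = x"
  shows "g permutes {1..n}"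
proof (rule bij_imp_permutes)
  have "g ` {1..n} = {1..n}" using endo_inj_surj[of "{1..n}" g] assms by auto
  then show "bij_betw g {1..n} {1..n}" using assms(1) by (simp add: bij_betw_def)
qed (use assms in auto)

lemma perm_facts:
  assumes "p permutes {1..n::nat}"
  shows "\<And>x. x \<in> {1..n} \<Longrightarrow> p x \<in> {1..n}" "\<And>x y. p x = p y \<Longrightarrow> x = y"
    "\<And>x. x \<notin> {1..n} \<Longrightarrow> p x = x" "\<And>y. y \<in> {1..n} \<Longrightarrow> \<exists>x\<in>{1..n}. p x = y"
proof -
  show "\<And>x. x \<in> {1..n} \<Longrightarrow> p x \<in> {1..n}" using permutes_in_image[OF assms] by blast
  show "\<And>x y. p x = p y \<Longrightarrow> x = y" using permutes_inj[OF assms] by (simp add: inj_eq)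
  show "\<And>x. x \<notin> {1..n} \<Longrightarrow> p x = x" by (rule permutes_not_in[OF assms])
  fix y assume "y \<in> {1..n}"
  then have "y \<in> p ` {1..n}" using permutes_image[OF assms] by simp
  then show "\<exists>x\<in>{1..n}. p x = y" by blast
qed

lemma rank:
  assumes "p permutes {1..n::nat}" "b \<in> {1..n}"
  shows "p b = card {c\<in>{1..n}. p c < p b} + 1"
proof -
  note pf = perm_facts[OF assms(1)]
  have "p ` {c\<in>{1..n}. p c < p b} = {1..<p b}"
  proof
    show "p ` {c \<in> {1..n}. p c < p b} \<subseteq> {1..<p b}"
    proof (rule image_subsetI)
      fix c assume c: "c \<in> {c \<in> {1..n}. p c < p b}"
      then have "p c \<in> {1..n}" using pf(1) by blast
      then show "p c \<in> {1..<p b}" using c by simp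
    qed
    show "{1..<p b} \<subseteq> p ` {c \<in> {1..n}. p c < p b}"
    proof
      fix y assume y: "y \<in> {1..<p b}"
      then have "y \<in> {1..n}" using pf(1)[OF assms(2)] by auto
      then obtain x where "x \<in> {1..n}" "p x = y" using pf(4) by blast
      then show "y \<in> p ` {c \<in> {1..n}. p c < p b}" using y by auto
    qed
  qed
  moreover have "inj_on p {c\<in>{1..n}. p c < p b}" using pf(2) by (meson inj_onI)
  ultimately have "card {c\<in>{1..n}. p c < p b} = card {1..<p b}" by (metis card_image)
  then show ?thesis using pf(1)[OF assms(2)] by simp
qed

lemma av312D: "av312 p n \<Longrightarrow> 1 \<le> a \<Longrightarrow> a < b \<Longrightarrow> b < c \<Longrightarrow> c \<le> n \<Longrightarrow> p b < p c \<Longrightarrow> p c < p a \<Longrightarrow> False"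
  unfolding av312_def by blast

definition fj :: "nat \<Rightarrow> nat \<Rightarrow> nat \<Rightarrow> nat" where
  "fj n j i = (if 1 \<le> i \<and> i \<le> j then n - j + i else if j < i \<and> i \<le> n then n + 1 - i else i)"

lemma end1_form:
  assumes P: "p permutes {1..n}" and n2: "2 \<le> n" and pn: "p n = 1"
    and av1: "av312 p n" and av2: "av312 (p \<circ> p) n"
  shows "\<exists>j. 1 \<le> j \<and> 2 * j \<le> n \<and> p = fj n j"
proof -
  note pf = perm_facts[OF P]
  have inj: "\<And>x y. p x = p y \<Longrightarrow> x = y" by (rule pf(2))
  have rng: "\<And>x. 1 \<le> x \<Longrightarrow> x \<le> n \<Longrightarrow> 1 \<le> p x \<and> p x \<le> n" using pf(1) by auto
  obtain j where j: "1 \<le> j" "j \<le> n" "p j = n" using pf(4)[of n] n2 by auto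
  have jn: "j < n" using j pn n2 by (cases "j = n") auto
  define x where "x = p 1"
  have x1: "2 \<le> x" "x \<le> n"
  proof -
    have "x \<noteq> 1" using inj[of 1 n] pn n2 x_def by auto
    moreover have "1 \<le> x \<and> x \<le> n" using rng[of 1] n2 x_def by auto
    ultimately show "2 \<le> x" "x \<le> n" by auto
  qed
  have F1: "\<And>a b. j < a \<Longrightarrow> a < b \<Longrightarrow> b \<le> n \<Longrightarrow> p b < p a"
  proof -
    fix a b assume h: "j < a" "a < b" "b \<le> n"
    have "p b \<noteq> p a" using inj h by force
    moreover have "p b < n" using rng[of b] h j inj[of b j] by force
    moreover have "\<not> p a < p b"
    proof
      assume "p a < p b"
      then show False using av312D[OF av1, of j a b] h j \<open>p b < n\<close> by auto
    qed
    ultimately show "p b < p a" by linarith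
  qed
  have F4: "\<And>a. 1 \<le> a \<Longrightarrow> a < j \<Longrightarrow> p (p a) < x"
  proof -
    fix a assume h: "1 \<le> a" "a < j"
    have "p (p a) \<noteq> x"
    proof
      assume "p (p a) = x"
      then have "p a = 1" using inj x_def by blast
      then have "a = n" using inj pn by metis
      then show False using h jn by auto
    qed
    moreover have "\<not> p (p a) > x"
    proof
      assume "p (p a) > x"
      then show False using av312D[OF av2, of a j n] h jn j pn x_def x1 by auto
    qed
    ultimately show "p (p a) < x" by linarith
  qed
  have pp1: "\<And>a. 1 \<le> a \<Longrightarrow> a \<le> n \<Longrightarrow> a \<noteq> j \<Longrightarrow> 2 \<le> p (p a)"
  proof -
    fix a assume h: "1 \<le> a" "a \<le> n" "a \<noteq> j"
    have "1 \<le> p (p a)" using rng h by auto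
    moreover have "p (p a) \<noteq> 1"
    proof
      assume "p (p a) = 1"
      then have "p a = n" using inj pn by metis
      then show False using inj j h by metis
    qed
    ultimately show "2 \<le> p (p a)" by linarith
  qed
  have F3: "j + 1 \<le> x"
  proof (cases "j = 1")
    case True
    then show ?thesis using j x_def n2 by auto
  next
    case False
    have "inj_on (\<lambda>a. p (p a)) {1..<j}" using inj by (meson inj_onI)
    moreover have "(\<lambda>a. p (p a)) ` {1..<j} \<subseteq> {2..<x}"
      using F4 pp1 jn by auto
    ultimately have "card {1..<j} \<le> card {2..<x}" by (rule card_inj_on_le) auto
    then show ?thesis using False j by auto
  qed
  have F2: "\<And>a b. 1 < a \<Longrightarrow> a < b \<Longrightarrow> b \<le> n \<Longrightarrow> p a < x \<Longrightarrow> p b < x \<Longrightarrow> p b < p a"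
  proof -
    fix a b assume h: "1 < a" "a < b" "b \<le> n" "p a < x" "p b < x"
    have "p b \<noteq> p a" using inj h by force
    moreover have "\<not> p a < p b"
    proof
      assume "p a < p b"
      then show False using av312D[OF av1, of 1 a b] h x_def by auto
    qed
    ultimately show "p b < p a" by linarith
  qed
  have G1: "\<And>b. j < b \<Longrightarrow> b \<le> n \<Longrightarrow> p b < x"
  proof -
    have Pj: "p (j+1) < x"
    proof (rule ccontr)
      assume "\<not> p (j+1) < x"
      moreover have "p (j+1) \<noteq> x" using inj[of "j+1" 1] j x_def by auto
      ultimately have y: "x < p (j+1)" by simp
      have yn: "p (j+1) \<le> n" using rng[of "j+1"] jn by auto
      have "j \<noteq> 1" using y yn x_def j by auto
      then have j2: "2 \<le> j" using j by auto
      have A1: "p (p (j+1)) < p x" using F1[of x "p (j+1)"] F3 y yn by auto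
      have A2: "2 \<le> p (p (j+1))" using pp1[of "j+1"] jn by auto
      show False using av312D[OF av2, of 1 j "j+1"] j2 jn A1 A2 j pn x_def by auto
    qed
    fix b assume h: "j < b" "b \<le> n"
    show "p b < x"
    proof (cases "b = j + 1")
      case True then show ?thesis using Pj by simp
    next
      case False
      then have "p b < p (j+1)" using F1[of "j+1" b] h by auto
      then show ?thesis using Pj by simp
    qed
  qed
  have G1': "\<And>a b. 1 \<le> a \<Longrightarrow> a \<le> j \<Longrightarrow> j < b \<Longrightarrow> b \<le> n \<Longrightarrow> p b < p a"
  proof -
    fix a b assume h: "1 \<le> a" "a \<le> j" "j < b" "b \<le> n"
    show "p b < p a"
    proof (cases "a = j")
      case True
      then show ?thesis using rng[of b] h inj[of b j] j by force
    next
      case aj: False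
      show ?thesis
      proof (cases "a = 1")
        case True then show ?thesis using G1 h x_def by auto
      next
        case False
        have "p a \<noteq> x" using inj[of a 1] False x_def by auto
        then consider "x < p a" | "p a < x" by linarith
        then show ?thesis
        proof cases
          case 1 then show ?thesis using G1[OF h(3,4)] by simp
        next
          case 2 then show ?thesis using F2[of a b] G1[OF h(3,4)] h aj False by auto
        qed
      qed
    qed
  qed
  have G2: "\<And>b. j < b \<Longrightarrow> b \<le> n \<Longrightarrow> p b = n + 1 - b"
  proof -
    fix b assume hb: "j < b" "b \<le> n"
    have "{c\<in>{1..n}. p c < p b} = {b<..n}"
    proof (intro set_eqI iffI)
      fix c assume "c \<in> {c\<in>{1..n}. p c < p b}"
      then have c: "1 \<le> c" "c \<le> n" "p c < p b" by auto
      show "c \<in> {b<..n}"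
      proof (rule ccontr)
        assume "c \<notin> {b<..n}"
        then have "c \<le> b" using c by auto
        then consider "c \<le> j" | "j < c \<and> c < b" | "c = b" by linarith
        then show False
        proof cases
          case 1 then show False using G1'[of c b] c hb by auto
        next
          case 2 then show False using F1[of c b] c hb by auto
        qed (use c in auto)
      qed
    next
      fix c assume "c \<in> {b<..n}"
      then show "c \<in> {c\<in>{1..n}. p c < p b}" using F1[of b c] hb by auto
    qed
    then show "p b = n + 1 - b" using rank[OF P, of b] hb j by auto
  qed
  have G3: "2 * j \<le> n"
  proof (rule ccontr)
    assume "\<not> 2 * j \<le> n"
    then have nj: "n < 2 * j" by simp
    obtain a where a: "a \<in> {1..n}" "p a = j" using pf(4)[of j] j by auto
    consider "j < a" | "a = j" | "a < j" by linarith
    then show False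
    proof cases
      case 1 then show False using G2[of a] a nj by auto
    next
      case 2 then show False using a j jn by auto
    next
      case 3 then show False using F4[of a] a j x1 by auto
    qed
  qed
  have G4: "\<And>a a'. 1 \<le> a \<Longrightarrow> a < a' \<Longrightarrow> a' \<le> j \<Longrightarrow> p a < p a'"
  proof -
    fix a a' assume h: "1 \<le> a" "a < a'" "a' \<le> j"
    have pan: "p a < n" using rng[of a] h j inj[of a j] by force
    show "p a < p a'"
    proof (cases "a' = j")
      case True then show ?thesis using pan j by simp
    next
      case False
      define u where "u = n + 1 - j"
      define v where "v = n + 1 - a'"
      define w where "w = n + 1 - a"
      have uvw: "j < u" "u < v" "v < w" "w \<le> n" using G3 h False j unfolding u_def v_def w_def by auto
      have "p u = j" "p v = a'" "p w = a" using G2[of u] G2[of v] G2[of w] uvw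
        unfolding u_def v_def w_def by auto
      moreover have "p a \<noteq> p a'" using inj h by force
      moreover have "\<not> p a' < p a"
      proof
        assume "p a' < p a"
        then show False using av312D[OF av2, of u v w] uvw \<open>p u = j\<close> \<open>p v = a'\<close> \<open>p w = a\<close> j pan
          by auto
      qed
      ultimately show ?thesis by linarith
    qed
  qed
  have G5: "\<And>a. 1 \<le> a \<Longrightarrow> a \<le> j \<Longrightarrow> p a = n - j + a"
  proof -
    fix a assume ha: "1 \<le> a" "a \<le> j"
    have "{c\<in>{1..n}. p c < p a} = {1..<a} \<union> {j<..n}"
    proof (intro set_eqI iffI)
      fix c assume "c \<in> {c\<in>{1..n}. p c < p a}"
      then have c: "1 \<le> c" "c \<le> n" "p c < p a" by auto
      show "c \<in> {1..<a} \<union> {j<..n}"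
      proof (rule ccontr)
        assume "c \<notin> {1..<a} \<union> {j<..n}"
        then have "a \<le> c" "c \<le> j" using c by auto
        then consider "c = a" | "a < c \<and> c \<le> j" by linarith
        then show False
        proof cases
          case 2 then show False using G4[of a c] c ha by auto
        qed (use c in auto)
      qed
    next
      fix c assume "c \<in> {1..<a} \<union> {j<..n}"
      then consider "1 \<le> c \<and> c < a" | "j < c \<and> c \<le> n" by auto
      then show "c \<in> {c\<in>{1..n}. p c < p a}"
      proof cases
        case 1 then show ?thesis using G4[of c a] ha j by auto
      next
        case 2 then show ?thesis using G1'[of a c] ha by auto
      qed
    qed
    moreover have "card ({1..<a} \<union> {j<..n}) = (a - 1) + (n - j)"
      by (subst card_Un_disjoint) (use ha in auto)
    ultimately show "p a = n - j + a" using rank[OF P, of a] ha j by auto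
  qed
  have "p = fj n j"
  proof
    fix i
    show "p i = fj n j i"
    proof (cases "1 \<le> i \<and> i \<le> n")
      case True
      then show ?thesis using G5[of i] G2[of i] unfolding fj_def by auto
    next
      case False
      then show ?thesis using pf(3)[of i] unfolding fj_def by auto
    qed
  qed
  then show ?thesis using j G3 by blast
qed

lemma fj_perm:
  assumes "1 \<le> j" "j \<le> n"
  shows "fj n j permutes {1..n}"
proof (rule permI)
  show "inj_on (fj n j) {1..n}"
    by (rule inj_onI) (use assms in \<open>auto simp: fj_def split: if_splits\<close>)
  show "fj n j ` {1..n} \<subseteq> {1..n}" using assms by (auto simp: fj_def)
  show "\<And>x. x \<notin> {1..n} \<Longrightarrow> fj n j x = x" by (auto simp: fj_def)
qed

lemma fj_av:
  assumes "1 \<le> j" "2 * j \<le> n"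
  shows "av312 (fj n j) n"
  unfolding av312_def
proof (intro allI impI notI)
  fix a b c assume h: "1 \<le> a" "a < b" "b < c" "c \<le> n" "fj n j b < fj n j c \<and> fj n j c < fj n j a"
  then show False using assms by (auto simp: fj_def split: if_splits)
qed

definition gj :: "nat \<Rightarrow> nat \<Rightarrow> nat \<Rightarrow> nat" where
  "gj n j i = (if i \<le> j then j + 1 - i else if i \<le> n - j then i else 2 * n - j + 1 - i)"

lemma fj_sq:
  assumes "1 \<le> j" "2 * j \<le> n" "1 \<le> i" "i \<le> n"
  shows "fj n j (fj n j i) = gj n j i"
  using assms by (auto simp: fj_def gj_def)

lemma fj_av2:
  assumes "1 \<le> j" "2 * j \<le> n"
  shows "av312 (fj n j \<circ> fj n j) n"
  unfolding av312_def
proof (intro allI impI notI)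
  fix a b c assume h: "1 \<le> a" "a < b" "b < c" "c \<le> n"
    "(fj n j \<circ> fj n j) b < (fj n j \<circ> fj n j) c \<and> (fj n j \<circ> fj n j) c < (fj n j \<circ> fj n j) a"
  then have "gj n j b < gj n j c \<and> gj n j c < gj n j a"
    using fj_sq[OF assms] by auto
  then show False using h assms by (auto simp: gj_def split: if_splits)
qed

definition Eset :: "nat \<Rightarrow> (nat \<Rightarrow> nat) set" where
  "Eset n = {p. p permutes {1..n} \<and> strongly_avoids p n pat312 3 \<and> p n = 1}"

lemma Eset_eq:
  assumes "2 \<le> n"
  shows "Eset n = fj n ` {1..n div 2}"
proof
  show "Eset n \<subseteq> fj n ` {1..n div 2}"
  proof
    fix p assume "p \<in> Eset n"
    then have "p permutes {1..n}" "av312 p n" "av312 (p \<circ> p) n" "p n = 1"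
      unfolding Eset_def sa_iff by auto
    then obtain j where "1 \<le> j" "2 * j \<le> n" "p = fj n j" using end1_form assms by blast
    then show "p \<in> fj n ` {1..n div 2}" by auto
  qed
  show "fj n ` {1..n div 2} \<subseteq> Eset n"
  proof
    fix p assume "p \<in> fj n ` {1..n div 2}"
    then obtain j where j: "1 \<le> j" "2 * j \<le> n" "p = fj n j" by auto
    then show "p \<in> Eset n"
      unfolding Eset_def sa_iff using fj_perm[of j n] fj_av[of j n] fj_av2[of j n]
      by (auto simp: fj_def)
  qed
qed

lemma card_Eset:
  assumes "1 \<le> n"
  shows "card (Eset n) = (if n = 1 then 1 else n div 2)"
proof (cases "n = 1")
  case True
  have "Eset 1 = {id}"
  proof
    show "Eset 1 \<subseteq> {id}"
    proof
      fix p assume "p \<in> Eset 1"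
      then have P: "p permutes {1..1}" "p 1 = 1" unfolding Eset_def by auto
      have "p = id"
      proof
        fix i show "p i = id i" using P permutes_not_in[OF P(1), of i] by (cases "i = 1") auto
      qed
      then show "p \<in> {id}" by simp
    qed
    show "{id} \<subseteq> Eset 1"
      unfolding Eset_def sa_iff av312_def by auto
  qed
  then show ?thesis using True by simp
next
  case False
  then have n2: "2 \<le> n" using assms by auto
  have "inj_on (fj n) {1..n div 2}"
  proof (rule inj_onI)
    fix j j' assume h: "j \<in> {1..n div 2}" "j' \<in> {1..n div 2}" "fj n j = fj n j'"
    then have e: "fj n j 1 = fj n j' 1" by simp
    have "fj n j 1 = n - j + 1" using h(1) by (auto simp: fj_def)
    moreover have "fj n j' 1 = n - j' + 1" using h(2) by (auto simp: fj_def)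
    ultimately have "n - j + 1 = n - j' + 1" using e by linarith
    moreover have "j \<le> n" "j' \<le> n" using h div_le_dividend[of n 2] by auto
    ultimately show "j = j'" by linarith
  qed
  then show ?thesis using Eset_eq[OF n2] False by (simp add: card_image)
qed

definition Sset :: "nat \<Rightarrow> (nat \<Rightarrow> nat) set" where
  "Sset n = {p. p permutes {1..n} \<and> strongly_avoids p n pat312 3}"

definition glue :: "nat \<Rightarrow> nat \<Rightarrow> (nat \<Rightarrow> nat) \<Rightarrow> (nat \<Rightarrow> nat) \<Rightarrow> nat \<Rightarrow> nat" where
  "glue n k q r i = (if i \<le> k then q i else if i \<le> n then r (i - k) + k else i)"

definition q_of :: "nat \<Rightarrow> (nat \<Rightarrow> nat) \<Rightarrow> nat \<Rightarrow> nat" where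
  "q_of k p i = (if i \<le> k then p i else i)"

definition r_of :: "nat \<Rightarrow> nat \<Rightarrow> (nat \<Rightarrow> nat) \<Rightarrow> nat \<Rightarrow> nat" where
  "r_of n k p i = (if 1 \<le> i \<and> i \<le> n - k then p (i + k) - k else i)"

lemma block:
  assumes P: "p permutes {1..n}" and av: "av312 p n" and k: "1 \<le> k" "k \<le> n" and pk: "p k = 1"
  shows "\<And>a. 1 \<le> a \<Longrightarrow> a \<le> k \<Longrightarrow> 1 \<le> p a \<and> p a \<le> k"
    and "\<And>b. k < b \<Longrightarrow> b \<le> n \<Longrightarrow> k < p b \<and> p b \<le> n"
proof -
  note pf = perm_facts[OF P]
  have inj: "\<And>x y. p x = p y \<Longrightarrow> x = y" by (rule pf(2))
  have rng: "\<And>x. 1 \<le> x \<Longrightarrow> x \<le> n \<Longrightarrow> 1 \<le> p x \<and> p x \<le> n" using pf(1) by auto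
  have lt: "\<And>a b. 1 \<le> a \<Longrightarrow> a < k \<Longrightarrow> k < b \<Longrightarrow> b \<le> n \<Longrightarrow> p a < p b"
  proof -
    fix a b assume h: "1 \<le> a" "a < k" "k < b" "b \<le> n"
    have "p a \<noteq> p b" using inj h by force
    moreover have "p b \<noteq> 1" using inj[of b k] pk h by auto
    moreover have "1 \<le> p b" using rng h by auto
    moreover have "\<not> p b < p a"
    proof
      assume "p b < p a"
      then show False using av312D[OF av, of a k b] h pk \<open>p b \<noteq> 1\<close> \<open>1 \<le> p b\<close> by auto
    qed
    ultimately show "p a < p b" by linarith
  qed
  show H: "\<And>a. 1 \<le> a \<Longrightarrow> a \<le> k \<Longrightarrow> 1 \<le> p a \<and> p a \<le> k"
  proof -
    fix a assume h: "1 \<le> a" "a \<le> k"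
    have "p a \<le> k"
    proof (rule ccontr)
      assume "\<not> p a \<le> k"
      then have pa: "k < p a" by simp
      have ak: "a < k" using pa pk h by (cases "a = k") auto
      have "inj_on p {k<..n}" using inj by (meson inj_onI)
      moreover have "p ` {k<..n} \<subseteq> {p a<..n}" using lt[of a] h ak rng by force
      ultimately have "card {k<..n} \<le> card {p a<..n}" by (rule card_inj_on_le) auto
      then show False using pa rng[of a] h k by auto
    qed
    then show "1 \<le> p a \<and> p a \<le> k" using rng h k by auto
  qed
  have img: "p ` {1..k} = {1..k}"
  proof (rule endo_inj_surj)
    show "p ` {1..k} \<subseteq> {1..k}" using H by auto
    show "inj_on p {1..k}" using inj by (meson inj_onI)
  qed auto
  show "\<And>b. k < b \<Longrightarrow> b \<le> n \<Longrightarrow> k < p b \<and> p b \<le> n"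
  proof -
    fix b assume h: "k < b" "b \<le> n"
    have "\<not> p b \<le> k"
    proof
      assume "p b \<le> k"
      moreover have "1 \<le> p b" using rng h k by auto
      ultimately have "p b \<in> p ` {1..k}" using img by auto
      then obtain a where "a \<in> {1..k}" "p a = p b" by auto
      then show False using inj h by force
    qed
    then show "k < p b \<and> p b \<le> n" using rng h k by auto
  qed
qed

lemma av_sum:
  assumes "av312 u k" "av312 v m"
    and hu: "\<And>i. 1 \<le> i \<Longrightarrow> i \<le> k \<Longrightarrow> h i = u i \<and> u i \<le> k"
    and hv: "\<And>i. 1 \<le> i \<Longrightarrow> i \<le> m \<Longrightarrow> h (i + k) = v i + k \<and> 1 \<le> v i"
  shows "av312 h (k + m)"
  unfolding av312_def
proof (intro allI impI notI)
  fix a b c assume h: "1 \<le> a" "a < b" "b < c" "c \<le> k + m" "h b < h c \<and> h c < h a"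
  consider "c \<le> k" | "k < a" | "a \<le> k \<and> k < c" by linarith
  then show False
  proof cases
    case 1
    then show False using av312D[OF assms(1), of a b c] h hu[of a] hu[of b] hu[of c] by auto
  next
    case 2
    have "h a = v (a - k) + k" "h b = v (b - k) + k" "h c = v (c - k) + k"
      using hv[of "a - k"] hv[of "b - k"] hv[of "c - k"] 2 h by auto
    moreover have "1 \<le> a - k" "a - k < b - k" "b - k < c - k" "c - k \<le> m" using 2 h by auto
    ultimately show False using av312D[OF assms(2), of "a - k" "b - k" "c - k"] h by auto
  next
    case 3
    have "h a \<le> k" using hu[of a] h 3 by auto
    moreover have "1 \<le> c - k" "c - k \<le> m" using h 3 by auto
    then have "h c > k" using hv[of "c - k"] h 3 by auto
    ultimately show False using h by auto
  qed
qed

lemma av_head: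
  assumes "av312 p n" "k \<le> n" "\<And>i. 1 \<le> i \<Longrightarrow> i \<le> k \<Longrightarrow> u i = p i"
  shows "av312 u k"
  unfolding av312_def
proof (intro allI impI notI)
  fix a b c assume h: "1 \<le> a" "a < b" "b < c" "c \<le> k" "u b < u c \<and> u c < u a"
  then show False using av312D[OF assms(1), of a b c] assms(2) assms(3)[of a] assms(3)[of b] assms(3)[of c] by auto
qed

lemma av_tail:
  assumes "av312 p n" "\<And>i. 1 \<le> i \<Longrightarrow> i \<le> n - k \<Longrightarrow> v i + k = p (i + k)"
  shows "av312 v (n - k)"
  unfolding av312_def
proof (intro allI impI notI)
  fix a b c assume h: "1 \<le> a" "a < b" "b < c" "c \<le> n - k" "v b < v c \<and> v c < v a"
  have "p (b + k) < p (c + k)" "p (c + k) < p (a + k)"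
    using h assms(2)[of a] assms(2)[of b] assms(2)[of c] by auto
  moreover have "c + k \<le> n" using h by auto
  ultimately show False using av312D[OF assms(1), of "a + k" "b + k" "c + k"] h by auto
qed

lemma glue_perm:
  assumes Q: "q permutes {1..k}" and R: "r permutes {1..n - k}" and k: "k \<le> n"
  shows "glue n k q r permutes {1..n}"
proof (rule permI)
  note qf = perm_facts[OF Q] and rf = perm_facts[OF R]
  show "inj_on (glue n k q r) {1..n}"
  proof (rule inj_onI)
    fix x y assume h: "x \<in> {1..n}" "y \<in> {1..n}" "glue n k q r x = glue n k q r y"
    consider "x \<le> k" "y \<le> k" | "x \<le> k" "k < y" | "k < x" "y \<le> k" | "k < x" "k < y" by linarith
    then show "x = y"
    proof cases
      case 1 then show ?thesis using h qf(2) by (auto simp: glue_def)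
    next
      case 2
      have "q x \<le> k" using h qf(1)[of x] 2 by auto
      moreover have "y - k \<in> {1..n-k}" using h 2 by auto
      then have "1 \<le> r (y - k)" using rf(1)[of "y - k"] by auto
      ultimately show ?thesis using h 2 by (auto simp: glue_def)
    next
      case 3
      have "q y \<le> k" using h qf(1)[of y] 3 by auto
      moreover have "x - k \<in> {1..n-k}" using h 3 by auto
      then have "1 \<le> r (x - k)" using rf(1)[of "x - k"] by auto
      ultimately show ?thesis using h 3 by (auto simp: glue_def)
    next
      case 4
      then have "r (x - k) = r (y - k)" using h by (auto simp: glue_def)
      then have "x - k = y - k" using rf(2) by blast
      then show ?thesis using 4 by auto
    qed
  qed
  show "glue n k q r ` {1..n} \<subseteq> {1..n}"
  proof
    fix y assume "y \<in> glue n k q r ` {1..n}"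
    then obtain x where x: "x \<in> {1..n}" "y = glue n k q r x" by auto
    show "y \<in> {1..n}"
    proof (cases "x \<le> k")
      case True then show ?thesis using x qf(1)[of x] k by (auto simp: glue_def)
    next
      case False
      then have "x - k \<in> {1..n-k}" using x by auto
      then have "r (x - k) \<in> {1..n-k}" using rf(1)[of "x - k"] by auto
      then show ?thesis using x False by (auto simp: glue_def)
    qed
  qed
  fix x assume "x \<notin> {1..n}"
  then consider "x = 0" | "n < x" by force
  then show "glue n k q r x = x"
  proof cases
    case 1 then show ?thesis using qf(3)[of 0] by (auto simp: glue_def)
  next
    case 2 then show ?thesis using k by (auto simp: glue_def)
  qed
qed

lemma glue_sa:
  assumes Q: "q permutes {1..k}" and R: "r permutes {1..n - k}" and k: "k \<le> n"
    and sq: "av312 q k" "av312 (q \<circ> q) k" and sr: "av312 r (n - k)" "av312 (r \<circ> r) (n - k)"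
  shows "av312 (glue n k q r) n" "av312 (glue n k q r \<circ> glue n k q r) n"
proof -
  note qf = perm_facts[OF Q] and rf = perm_facts[OF R]
  have e: "n = k + (n - k)" using k by simp
  have "av312 (glue n k q r) (k + (n - k))"
  proof (rule av_sum[OF sq(1) sr(1)])
    show "\<And>i. 1 \<le> i \<Longrightarrow> i \<le> k \<Longrightarrow> glue n k q r i = q i \<and> q i \<le> k"
      using qf(1) by (auto simp: glue_def)
    fix i assume i: "1 \<le> i" "i \<le> n - k"
    then have "i \<in> {1..n - k}" by simp
    then have "r i \<in> {1..n - k}" using rf(1) by blast
    moreover have "i + k \<le> n" "\<not> i + k \<le> k" using i k by auto
    ultimately show "glue n k q r (i + k) = r i + k \<and> 1 \<le> r i" by (simp add: glue_def)
  qed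
  then show "av312 (glue n k q r) n" using e by simp
  have "av312 (glue n k q r \<circ> glue n k q r) (k + (n - k))"
  proof (rule av_sum[OF sq(2) sr(2)])
    show "\<And>i. 1 \<le> i \<Longrightarrow> i \<le> k \<Longrightarrow> (glue n k q r \<circ> glue n k q r) i = (q \<circ> q) i \<and> (q \<circ> q) i \<le> k"
    proof -
      fix i assume "1 \<le> i" "i \<le> k"
      then have "q i \<in> {1..k}" "q (q i) \<in> {1..k}" using qf(1) by auto
      then show "(glue n k q r \<circ> glue n k q r) i = (q \<circ> q) i \<and> (q \<circ> q) i \<le> k"
        using \<open>i \<le> k\<close> by (auto simp: glue_def)
    qed
    show "\<And>i. 1 \<le> i \<Longrightarrow> i \<le> n - k \<Longrightarrow> (glue n k q r \<circ> glue n k q r) (i + k) = (r \<circ> r) i + k \<and> 1 \<le> (r \<circ> r) i"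
    proof -
      fix i assume "1 \<le> i" "i \<le> n - k"
      then have "r i \<in> {1..n - k}" "r (r i) \<in> {1..n - k}" using rf(1) by auto
      then show "(glue n k q r \<circ> glue n k q r) (i + k) = (r \<circ> r) i + k \<and> 1 \<le> (r \<circ> r) i"
        using \<open>i \<le> n - k\<close> \<open>1 \<le> i\<close> by (auto simp: glue_def)
    qed
  qed
  then show "av312 (glue n k q r \<circ> glue n k q r) n" using e by simp
qed

lemma decomp_inv:
  assumes S: "p \<in> Sset n" and k: "1 \<le> k" "k \<le> n" and pk: "p k = 1"
  shows "q_of k p \<in> Eset k" "r_of n k p \<in> Sset (n - k)" "glue n k (q_of k p) (r_of n k p) = p"
proof -
  have P: "p permutes {1..n}" and av1: "av312 p n" and av2: "av312 (p \<circ> p) n"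
    using S unfolding Sset_def sa_iff by auto
  note pf = perm_facts[OF P]
  note B1 = block(1)[OF P av1 k pk] and B2 = block(2)[OF P av1 k pk]
  have Q: "q_of k p permutes {1..k}"
  proof (rule permI)
    show "inj_on (q_of k p) {1..k}" using pf(2) by (auto simp: q_of_def intro!: inj_onI)
    show "q_of k p ` {1..k} \<subseteq> {1..k}" using B1 by (auto simp: q_of_def)
    fix x assume "x \<notin> {1..k}"
    then consider "x = 0" | "k < x" by force
    then show "q_of k p x = x"
    proof cases
      case 1 then show ?thesis using pf(3)[of 0] by (auto simp: q_of_def)
    qed (auto simp: q_of_def)
  qed
  have qq: "\<And>i. 1 \<le> i \<Longrightarrow> i \<le> k \<Longrightarrow> (q_of k p \<circ> q_of k p) i = (p \<circ> p) i"
    using B1 by (auto simp: q_of_def)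
  have avq: "av312 (q_of k p) k" by (rule av_head[OF av1 k(2)]) (auto simp: q_of_def)
  have avqq: "av312 (q_of k p \<circ> q_of k p) k" by (rule av_head[OF av2 k(2) qq])
  show "q_of k p \<in> Eset k"
    unfolding Eset_def sa_iff using Q avq avqq pk by (auto simp: q_of_def)
  have R: "r_of n k p permutes {1..n - k}"
  proof (rule permI)
    show "inj_on (r_of n k p) {1..n - k}"
    proof (rule inj_onI)
      fix x y assume h: "x \<in> {1..n - k}" "y \<in> {1..n - k}" "r_of n k p x = r_of n k p y"
      have "k < p (x + k)" "k < p (y + k)" using B2[of "x + k"] B2[of "y + k"] h by auto
      then have "p (x + k) = p (y + k)" using h by (auto simp: r_of_def)
      then show "x = y" using pf(2) by force
    qed
    show "r_of n k p ` {1..n - k} \<subseteq> {1..n - k}"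
    proof
      fix y assume "y \<in> r_of n k p ` {1..n - k}"
      then obtain x where x: "x \<in> {1..n - k}" "y = r_of n k p x" by auto
      then have "k < p (x + k) \<and> p (x + k) \<le> n" using B2[of "x + k"] by auto
      then show "y \<in> {1..n - k}" using x by (auto simp: r_of_def)
    qed
    show "\<And>x. x \<notin> {1..n - k} \<Longrightarrow> r_of n k p x = x" by (auto simp: r_of_def)
  qed
  have rk: "\<And>i. 1 \<le> i \<Longrightarrow> i \<le> n - k \<Longrightarrow> r_of n k p i + k = p (i + k) \<and> r_of n k p i \<in> {1..n-k}"
  proof -
    fix i assume "1 \<le> i" "i \<le> n - k"
    then have "k < p (i + k) \<and> p (i + k) \<le> n" using B2[of "i + k"] by auto
    then show "r_of n k p i + k = p (i + k) \<and> r_of n k p i \<in> {1..n-k}"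
      using \<open>1 \<le> i\<close> \<open>i \<le> n - k\<close> by (auto simp: r_of_def)
  qed
  have avr: "av312 (r_of n k p) (n - k)" by (rule av_tail[OF av1]) (use rk in auto)
  have avrr: "av312 (r_of n k p \<circ> r_of n k p) (n - k)"
  proof (rule av_tail[OF av2])
    fix i assume h: "1 \<le> i" "i \<le> n - k"
    have a: "r_of n k p i + k = p (i + k)" "r_of n k p i \<in> {1..n-k}" using rk[OF h] by auto
    then have b: "r_of n k p (r_of n k p i) + k = p (r_of n k p i + k)" using rk by auto
    show "(r_of n k p \<circ> r_of n k p) i + k = (p \<circ> p) (i + k)" using a b by simp
  qed
  show "r_of n k p \<in> Sset (n - k)" unfolding Sset_def sa_iff using R avr avrr by auto
  show "glue n k (q_of k p) (r_of n k p) = p"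
  proof
    fix i
    consider "i \<le> k" | "k < i \<and> i \<le> n" | "n < i" by linarith
    then show "glue n k (q_of k p) (r_of n k p) i = p i"
    proof cases
      case 1 then show ?thesis by (auto simp: glue_def q_of_def)
    next
      case 2
      then have "1 \<le> i - k" "i - k \<le> n - k" by auto
      from rk[OF this] show ?thesis using 2 by (auto simp: glue_def)
    next
      case 3 then show ?thesis using pf(3)[of i] k by (auto simp: glue_def)
    qed
  qed
qed

lemma glue_in:
  assumes Q: "q \<in> Eset k" and R: "r \<in> Sset (n - k)" and k: "1 \<le> k" "k \<le> n"
  shows "glue n k q r \<in> Sset n" "glue n k q r k = 1"
    "q_of k (glue n k q r) = q" "r_of n k (glue n k q r) = r"
proof -
  have Qp: "q permutes {1..k}" and q1: "av312 q k" "av312 (q \<circ> q) k" and qk: "q k = 1"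
    using Q unfolding Eset_def sa_iff by auto
  have Rp: "r permutes {1..n - k}" and r1: "av312 r (n - k)" "av312 (r \<circ> r) (n - k)"
    using R unfolding Sset_def sa_iff by auto
  note qf = perm_facts[OF Qp] and rf = perm_facts[OF Rp]
  show "glue n k q r \<in> Sset n"
    unfolding Sset_def sa_iff using glue_perm[OF Qp Rp k(2)] glue_sa[OF Qp Rp k(2) q1 r1] by auto
  show "glue n k q r k = 1" using qk by (simp add: glue_def)
  show "q_of k (glue n k q r) = q"
  proof
    fix i show "q_of k (glue n k q r) i = q i"
      using qf(3)[of i] by (auto simp: q_of_def glue_def)
  qed
  show "r_of n k (glue n k q r) = r"
  proof
    fix i show "r_of n k (glue n k q r) i = r i"
      using rf(3)[of i] by (auto simp: r_of_def glue_def)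
  qed
qed

lemma finite_Sset: "finite (Sset n)"
proof -
  have "Sset n \<subseteq> {p. p permutes {1..n}}" unfolding Sset_def by auto
  moreover have "finite {p. p permutes {1..n::nat}}" by (rule finite_permutations) simp
  ultimately show ?thesis by (rule finite_subset)
qed

lemma card_Pk:
  assumes k: "1 \<le> k" "k \<le> n"
  shows "card {p\<in>Sset n. p k = 1} = card (Eset k) * card (Sset (n - k))"
proof -
  have "bij_betw (\<lambda>x. glue n k (fst x) (snd x)) (Eset k \<times> Sset (n - k)) {p\<in>Sset n. p k = 1}"
  proof (rule bij_betw_byWitness[where f' = "\<lambda>p. (q_of k p, r_of n k p)"])
    show "\<forall>a\<in>Eset k \<times> Sset (n - k). (q_of k (glue n k (fst a) (snd a)), r_of n k (glue n k (fst a) (snd a))) = a"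
    proof
      fix a assume "a \<in> Eset k \<times> Sset (n - k)"
      then have a: "fst a \<in> Eset k" "snd a \<in> Sset (n - k)" by auto
      have "q_of k (glue n k (fst a) (snd a)) = fst a" by (rule glue_in(3)[OF a k])
      moreover have "r_of n k (glue n k (fst a) (snd a)) = snd a" by (rule glue_in(4)[OF a k])
      ultimately show "(q_of k (glue n k (fst a) (snd a)), r_of n k (glue n k (fst a) (snd a))) = a"
        by (simp add: prod_eq_iff)
    qed
    show "\<forall>a'\<in>{p \<in> Sset n. p k = 1}. glue n k (fst (q_of k a', r_of n k a')) (snd (q_of k a', r_of n k a')) = a'"
    proof
      fix p assume "p \<in> {p \<in> Sset n. p k = 1}"
      then have p: "p \<in> Sset n" "p k = 1" by auto
      show "glue n k (fst (q_of k p, r_of n k p)) (snd (q_of k p, r_of n k p)) = p"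
        using decomp_inv(3)[OF p(1) k p(2)] by simp
    qed
    show "(\<lambda>x. glue n k (fst x) (snd x)) ` (Eset k \<times> Sset (n - k)) \<subseteq> {p \<in> Sset n. p k = 1}"
    proof
      fix y assume "y \<in> (\<lambda>x. glue n k (fst x) (snd x)) ` (Eset k \<times> Sset (n - k))"
      then obtain a where a: "fst a \<in> Eset k" "snd a \<in> Sset (n - k)" "y = glue n k (fst a) (snd a)" by auto
      show "y \<in> {p \<in> Sset n. p k = 1}" using glue_in(1,2)[OF a(1,2) k] a(3) by simp
    qed
    show "(\<lambda>p. (q_of k p, r_of n k p)) ` {p \<in> Sset n. p k = 1} \<subseteq> Eset k \<times> Sset (n - k)"
    proof
      fix y assume "y \<in> (\<lambda>p. (q_of k p, r_of n k p)) ` {p \<in> Sset n. p k = 1}"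
      then obtain p where p: "p \<in> Sset n" "p k = 1" "y = (q_of k p, r_of n k p)" by auto
      show "y \<in> Eset k \<times> Sset (n - k)" using decomp_inv(1,2)[OF p(1) k p(2)] p(3) by simp
    qed
  qed
  then have "card (Eset k \<times> Sset (n - k)) = card {p\<in>Sset n. p k = 1}"
    by (rule bij_betw_same_card)
  then show ?thesis using card_cartesian_product[of "Eset k" "Sset (n - k)"] by simp
qed

lemma Sset_rec:
  assumes n: "1 \<le> n"
  shows "card (Sset n) = (\<Sum>k=1..n. card (Eset k) * card (Sset (n - k)))"
proof -
  have eq: "Sset n = (\<Union>k\<in>{1..n}. {p\<in>Sset n. p k = 1})"
  proof
    show "Sset n \<subseteq> (\<Union>k\<in>{1..n}. {p\<in>Sset n. p k = 1})"
    proof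
      fix p assume p: "p \<in> Sset n"
      then have "p permutes {1..n}" unfolding Sset_def by auto
      then obtain k where "k \<in> {1..n}" "p k = 1" using perm_facts(4)[of p n 1] n by auto
      then show "p \<in> (\<Union>k\<in>{1..n}. {p\<in>Sset n. p k = 1})" using p by auto
    qed
  qed auto
  have "card (\<Union>k\<in>{1..n}. {p\<in>Sset n. p k = 1}) = (\<Sum>k=1..n. card {p\<in>Sset n. p k = 1})"
  proof (rule card_UN_disjoint)
    show "finite {1..n}" by simp
    show "\<forall>i\<in>{1..n}. finite {p \<in> Sset n. p i = 1}" using finite_Sset by auto
    show "\<forall>i\<in>{1..n}. \<forall>j\<in>{1..n}. i \<noteq> j \<longrightarrow> {p \<in> Sset n. p i = 1} \<inter> {p \<in> Sset n. p j = 1} = {}"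
    proof (intro ballI impI)
      fix i j assume "i \<in> {1..n}" "j \<in> {1..n}" "i \<noteq> j"
      show "{p \<in> Sset n. p i = 1} \<inter> {p \<in> Sset n. p j = 1} = {}"
      proof (rule ccontr)
        assume "{p \<in> Sset n. p i = 1} \<inter> {p \<in> Sset n. p j = 1} \<noteq> {}"
        then obtain p where "p \<in> Sset n" "p i = 1" "p j = 1" by auto
        then have "p permutes {1..n}" unfolding Sset_def by auto
        then show False using perm_facts(2)[of p n i j] \<open>p i = 1\<close> \<open>p j = 1\<close> \<open>i \<noteq> j\<close> by auto
      qed
    qed
  qed
  then show ?thesis using eq card_Pk by (metis (no_types, lifting) atLeastAtMost_iff sum.cong)
qed

lemma Sset0: "card (Sset 0) = 1"
proof -
  have "Sset 0 = {id}"
    unfolding Sset_def sa_iff av312_def by auto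
  then show ?thesis by simp
qed

lemma fps_div_from_mult:
  fixes B N D :: "rat fps"
  assumes "B * D = N" "D $ 0 \<noteq> 0"
  shows "B = N / D"
proof -
  have "N / D = N * inverse D" using assms(2) by (rule fps_divide_unit)
  also have "\<dots> = B * (D * inverse D)" using assms(1) by (simp add: mult.assoc)
  also have "D * inverse D = 1" using assms(2) by (rule inverse_mult_eq_1')
  finally show ?thesis by simp
qed

lemma Bclosed:
  fixes B :: "rat fps"
  defines "B \<equiv> Abs_fps (\<lambda>n. if n = 0 then 0 else if n = 1 then 1 else of_nat (n div 2))"
  shows "B * (fps_X ^ 3 - fps_X ^ 2 - fps_X + 1) = fps_X ^ 4 - fps_X ^ 3 + fps_X"
proof -
  have e: "B * (fps_X ^ 3 - fps_X ^ 2 - fps_X + 1) = fps_X ^ 3 * B - fps_X ^ 2 * B - fps_X * B + B"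
    by algebra
  have c1: "\<And>n. (fps_X ^ 3 * B - fps_X ^ 2 * B - fps_X * B + B) $ n =
     (if n < 3 then 0 else B $ (n - 3)) - (if n < 2 then 0 else B $ (n - 2)) - (if n = 0 then 0 else B $ (n - 1)) + B $ n"
    by (simp only: fps_add_nth fps_sub_nth fps_X_power_mult_nth fps_X_mult_nth)
  have c2: "\<And>n. (fps_X ^ 4 - fps_X ^ 3 + fps_X :: rat fps) $ n =
     (if n = 4 then 1 else 0) - (if n = 3 then 1 else 0) + (if n = 1 then 1 else 0)"
    by (simp only: fps_add_nth fps_sub_nth fps_X_power_nth fps_X_nth)
  have b: "\<And>n. B $ n = (if n = 0 then 0 else if n = 1 then 1 else of_nat (n div 2))"
    by (simp add: B_def)
  have key: "(if n < 3 then 0 else B $ (n - 3)) - (if n < 2 then 0 else B $ (n - 2)) - (if n = 0 then 0 else B $ (n - 1)) + B $ n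
     = (if n = 4 then 1 else 0) - (if n = 3 then 1 else 0) + (if n = 1 then 1 else (0::rat))" for n :: nat
  proof -
    consider "n = 0" | "n = 1" | "n = 2" | "n = 3" | "n = 4" | "n \<ge> 5" by linarith
    then show ?thesis
    proof cases
      case 6
      have d1: "n div 2 = (n - 2) div 2 + 1"
      proof -
        have "n = (n - 2) + 2" using 6 by simp
        then have "n div 2 = ((n - 2) + 2) div 2" by simp
        also have "\<dots> = (n - 2) div 2 + 1" by simp
        finally show ?thesis .
      qed
      have d2: "(n - 1) div 2 = (n - 3) div 2 + 1"
      proof -
        have "n - 1 = (n - 3) + 2" using 6 by simp
        then have "(n - 1) div 2 = ((n - 3) + 2) div 2" by simp
        also have "\<dots> = (n - 3) div 2 + 1" by simp
        finally show ?thesis .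
      qed
      have "(n - 3) div 2 + n div 2 = (n - 2) div 2 + (n - 1) div 2" using d1 d2 by simp
      then have h: "(of_nat ((n - 3) div 2) :: rat) + of_nat (n div 2) = of_nat ((n - 2) div 2) + of_nat ((n - 1) div 2)"
        by (metis of_nat_add)
      have "B $ (n - 3) = of_nat ((n - 3) div 2)" "B $ (n - 2) = of_nat ((n - 2) div 2)"
        "B $ (n - 1) = of_nat ((n - 1) div 2)" "B $ n = of_nat (n div 2)" using 6 b by auto
      moreover have "\<not> n < 3" "\<not> n < 2" "n \<noteq> 0" "n \<noteq> 4" "n \<noteq> 3" "n \<noteq> 1" using 6 by auto
      ultimately show ?thesis using h by simp
    qed (simp_all add: b)
  qed
  show ?thesis
  proof (rule fps_ext)
    fix n :: nat
    show "(B * (fps_X ^ 3 - fps_X ^ 2 - fps_X + 1)) $ n = (fps_X ^ 4 - fps_X ^ 3 + fps_X) $ n"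
      by (subst e, subst c1, subst c2, rule key)
  qed
qed

theorem mainTheorem8:
  fixes B :: "rat fps"
  defines "B \<equiv> Abs_fps (\<lambda>n. if n = 0 then 0 else if n = 1 then 1 else of_nat (n div 2))"
  shows "Abs_fps (\<lambda>n. of_nat (Sav n pat312 3) :: rat) =
           (fps_X ^ 2 + fps_X - 1 - fps_X ^ 3) / (fps_X ^ 4 - 2 * fps_X ^ 3 + fps_X ^ 2 + 2 * fps_X - 1)
       \<and> Abs_fps (\<lambda>n. of_nat (Sav n pat312 3) :: rat) = 1 / (1 - B)
       \<and> B = (fps_X ^ 4 - fps_X ^ 3 + fps_X) / ((fps_X - 1) ^ 2 * (fps_X + 1))
       \<and> B = Abs_fps (\<lambda>n. if n = 0 then 0 else of_nat (Sav_end1 n pat312 3))"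
proof -
  have SavS: "\<And>n. Sav n pat312 3 = card (Sset n)" by (simp add: Sav_def Sset_def)
  have SavE: "\<And>n. Sav_end1 n pat312 3 = card (Eset n)" by (simp add: Sav_end1_def Eset_def)
  define A where "A = Abs_fps (\<lambda>n. of_nat (Sav n pat312 3) :: rat)"
  have Bn: "\<And>i. B $ i = (if i = 0 then 0 else of_nat (card (Eset i)))"
    using card_Eset by (simp add: B_def)
  have B4: "B = Abs_fps (\<lambda>n. if n = 0 then 0 else of_nat (Sav_end1 n pat312 3))"
    by (rule fps_ext) (simp add: Bn SavE)
  have An: "\<And>i. A $ i = of_nat (card (Sset i))" by (simp add: A_def SavS)
  have BA: "(1 - B) * A = 1"
  proof (rule fps_ext)
    fix n :: nat
    show "((1 - B) * A) $ n = 1 $ n"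
    proof (cases "n = 0")
      case True
      then show ?thesis by (simp add: algebra_simps Bn An Sset0)
    next
      case False
      have "(B * A) $ n = (\<Sum>i=0..n. B $ i * A $ (n - i))" by (rule fps_mult_nth)
      also have "\<dots> = B $ 0 * A $ (n - 0) + (\<Sum>i=Suc 0..n. B $ i * A $ (n - i))"
        by (rule sum.atLeast_Suc_atMost) simp
      also have "\<dots> = (\<Sum>i=1..n. of_nat (card (Eset i)) * of_nat (card (Sset (n - i))))"
        by (simp add: Bn An)
      also have "\<dots> = of_nat (\<Sum>i=1..n. card (Eset i) * card (Sset (n - i)))" by simp
      also have "\<dots> = A $ n" using Sset_rec[of n] False by (simp add: An)
      finally have "(B * A) $ n = A $ n" .
      then show ?thesis using False by (simp add: algebra_simps)
    qed
  qed
  have B0: "(1 - B) $ 0 = 1" by (simp add: Bn)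
  have part2: "A = 1 / (1 - B)"
    by (rule fps_div_from_mult) (use BA B0 in \<open>simp_all add: mult.commute\<close>)
  have Dfac: "(fps_X - 1) ^ 2 * (fps_X + 1) = (fps_X ^ 3 - fps_X ^ 2 - fps_X + 1 :: rat fps)"
    by (simp add: power2_eq_square power3_eq_cube algebra_simps)
  have BD: "B * (fps_X ^ 3 - fps_X ^ 2 - fps_X + 1) = fps_X ^ 4 - fps_X ^ 3 + fps_X"
    unfolding B_def by (rule Bclosed)
  have part3: "B = (fps_X ^ 4 - fps_X ^ 3 + fps_X) / ((fps_X - 1) ^ 2 * (fps_X + 1))"
    unfolding Dfac by (rule fps_div_from_mult[OF BD]) simp
  have AQ: "A * (fps_X ^ 4 - 2 * fps_X ^ 3 + fps_X ^ 2 + 2 * fps_X - 1) = fps_X ^ 2 + fps_X - 1 - fps_X ^ 3"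
  proof -
    have "A * (fps_X ^ 4 - 2 * fps_X ^ 3 + fps_X ^ 2 + 2 * fps_X - 1)
        = A * (B * (fps_X ^ 3 - fps_X ^ 2 - fps_X + 1) - (fps_X ^ 3 - fps_X ^ 2 - fps_X + 1))"
      unfolding BD by (simp add: algebra_simps)
    also have "\<dots> = - ((fps_X ^ 3 - fps_X ^ 2 - fps_X + 1) * ((1 - B) * A))"
      by (simp add: algebra_simps)
    also have "\<dots> = fps_X ^ 2 + fps_X - 1 - fps_X ^ 3" unfolding BA by (simp add: algebra_simps)
    finally show ?thesis .
  qed
  have part1: "A = (fps_X ^ 2 + fps_X - 1 - fps_X ^ 3) / (fps_X ^ 4 - 2 * fps_X ^ 3 + fps_X ^ 2 + 2 * fps_X - 1)"
    by (rule fps_div_from_mult[OF AQ]) simp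
  show ?thesis using part1 part2 part3 B4 unfolding A_def by blast
qed

end
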